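(* For every cardinal $\kappa$ there is a cardinal $\lambda$ such that $\lambda\rightarrow(\lambda)_\kappa^{\mathrm{AFP}}$. In fact, $\lambda=\max\{\omega,(2^\kappa)^+\}$ suffices.
   Context: For a group $G$, an ordinal $\mu$ and a $\mu$-sequence $(g_\alpha\mid\alpha<\mu)$ of elements of $G$, its set of adjacent finite products is $\mathrm{AFP}(g_\alpha\mid\alpha<\mu)=\{g_\alpha g_{\alpha+1}\cdots g_{\alpha+n}\mid \alpha<\mu,\ n<\omega\}$ (all indices lying below $\mu$). For a group $G$, an ordinal $\mu$ and a cardinal $\kappa$, $G\rightarrow(\mu)_\kappa^{\mathrm{AFP}}$ means: for every colouring $c:G\to\kappa$ there is an injective $\mu$-sequence $(g_\alpha\mid\alpha<\mu)$ of elements of $G$ such that $\mathrm{AFP}(g_\alpha\mid\alpha<\mu)$ is monochromatic for $c$. For a cardinal $\lambda$, $\lambda\rightarrow(\mu)_\kappa^{\mathrm{AFP}}$ means that $G\rightarrow(\mu)_\kappa^{\mathrm{AFP}}$ holds for every group $G$ with $|G|=\lambda$. *)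

theory Defs
  imports Main "HOL-Algebra.Group"
begin

text \<open>Ordinals are represented by well-orders r (index set Field r). The successor
  of an index a is the least element of Field r strictly above a; alpha + n is the
  n-fold successor.\<close>

definition osucc :: "'i rel \<Rightarrow> 'i \<Rightarrow> 'i" where
  "osucc r a = wo_rel.suc r {a}"

definition oplusn :: "'i rel \<Rightarrow> 'i \<Rightarrow> nat \<Rightarrow> 'i" where
  "oplusn r a n = (osucc r ^^ n) a"

text \<open>alpha + i lies below mu (i.e. exists in Field r) for all i \<le> n.\<close>
definition indices_below :: "'i rel \<Rightarrow> 'i \<Rightarrow> nat \<Rightarrow> bool" where
  "indices_below r a n \<longleftrightarrow> a \<in> Field r \<and> (\<forall>i<n. AboveS r {oplusn r a i} \<noteq> {})"

definition adj_prod :: "('a, 'b) monoid_scheme \<Rightarrow> 'i rel \<Rightarrow> ('i \<Rightarrow> 'a) \<Rightarrow> 'i \<Rightarrow> nat \<Rightarrow> 'a" where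
  "adj_prod G r g a n = foldr (\<lambda>i acc. g (oplusn r a i) \<otimes>\<^bsub>G\<^esub> acc) [0..<Suc n] \<one>\<^bsub>G\<^esub>"

definition AFP :: "('a, 'b) monoid_scheme \<Rightarrow> 'i rel \<Rightarrow> ('i \<Rightarrow> 'a) \<Rightarrow> 'a set" where
  "AFP G r g = {adj_prod G r g a n | a n. indices_below r a n}"

text \<open>G \<rightarrow> (mu)_K^AFP, where mu is the order type of r and kappa = |K|.\<close>
definition AFP_arrow :: "('a, 'b) monoid_scheme \<Rightarrow> 'i rel \<Rightarrow> 'k set \<Rightarrow> bool" where
  "AFP_arrow G r K \<longleftrightarrow>
     (\<forall>c \<in> carrier G \<rightarrow> K. \<exists>g. g \<in> Field r \<rightarrow> carrier G \<and> inj_on g (Field r) \<and>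
        (\<exists>k. \<forall>x \<in> AFP G r g. c x = k))"

text \<open>r is (a cardinal order representing) max(omega, (2^|K|)^+).\<close>
definition is_lambda_of :: "'i rel \<Rightarrow> 'k set \<Rightarrow> bool" where
  "is_lambda_of r K \<longleftrightarrow>
     ((natLeq, cardSuc (card_of (Pow K))) \<in> ordLeq \<longrightarrow> (r, cardSuc (card_of (Pow K))) \<in> ordIso) \<and>
     ((cardSuc (card_of (Pow K)), natLeq) \<in> ordLess \<longrightarrow> (r, natLeq) \<in> ordIso)"

end

theory Submission
  imports Defs "HOL-Library.Ramsey"
begin

unbundle cardinal_syntax

locale er_tree =
  fixes S :: "'a set" and W :: "'a rel" and f :: "'a \<Rightarrow> 'a \<Rightarrow> 'k"
  assumes wo: "well_order_on S W"
begin

definition R :: "'a rel" where "R = W - Id"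
definition Q :: "'a \<Rightarrow> 'a \<Rightarrow> bool" where
  "Q x = wfrec R (\<lambda>QQ y. \<forall>z. (z,y) \<in> R \<longrightarrow> QQ z \<longrightarrow> f z y = f z x)"
definition P :: "'a \<Rightarrow> 'a set" where "P x = {y. (y,x) \<in> R \<and> Q x y}"

lemma FieldW: "Field W = S" using well_order_on_Field[OF wo] by simp
lemma WO: "Well_order W" using well_order_on_Well_order[OF wo] by simp
lemma wfR: "wf R" using wo unfolding well_order_on_def R_def by simp
lemma R_S: "(a,b) \<in> R \<Longrightarrow> a \<in> S \<and> b \<in> S"
  using FieldW unfolding R_def Field_def by auto
lemma R_irr: "(a,a) \<notin> R" unfolding R_def by auto
lemma R_trans: assumes "(a,b)\<in>R" "(b,c)\<in>R" shows "(a,c)\<in>R"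
proof -
  have t: "trans W" and an: "antisym W" using wo
    unfolding well_order_on_def linear_order_on_def partial_order_on_def preorder_on_def by auto
  have "(a,c) \<in> W" using assms t unfolding R_def trans_def by blast
  moreover have "a \<noteq> c" using assms an unfolding R_def antisym_def by blast
  ultimately show ?thesis unfolding R_def by auto
qed
lemma R_total: assumes "a\<in>S" "b\<in>S" "a\<noteq>b" shows "(a,b)\<in>R \<or> (b,a)\<in>R"
  using wo assms unfolding well_order_on_def linear_order_on_def total_on_def R_def by auto
lemma W_refl: "a \<in> S \<Longrightarrow> (a,a) \<in> W"
  using wo unfolding well_order_on_def linear_order_on_def partial_order_on_def preorder_on_def refl_on_def by auto
lemma R_W: "(a,b) \<in> R \<Longrightarrow> (a,b) \<in> W" unfolding R_def by auto
lemma W_R: "(a,b) \<in> W \<Longrightarrow> a \<noteq> b \<Longrightarrow> (a,b) \<in> R" unfolding R_def by auto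

lemma Q_eq: "Q x y = (\<forall>z. (z,y) \<in> R \<longrightarrow> Q x z \<longrightarrow> f z y = f z x)"
  unfolding Q_def by (subst wfrec[OF wfR]) (simp add: cut_apply)

lemma P_char: "y \<in> P x \<longleftrightarrow> (y,x) \<in> R \<and> (\<forall>z\<in>P x. (z,y) \<in> R \<longrightarrow> f z y = f z x)"
proof
  assume "y \<in> P x"
  then show "(y,x) \<in> R \<and> (\<forall>z\<in>P x. (z,y) \<in> R \<longrightarrow> f z y = f z x)"
    unfolding P_def using Q_eq[of x y] by auto
next
  assume a: "(y,x) \<in> R \<and> (\<forall>z\<in>P x. (z,y) \<in> R \<longrightarrow> f z y = f z x)"
  have "Q x y"
  proof (subst Q_eq, intro allI impI)
    fix z assume "(z,y) \<in> R" "Q x z"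
    then have "z \<in> P x" using a R_trans unfolding P_def by blast
    then show "f z y = f z x" using a \<open>(z,y) \<in> R\<close> by blast
  qed
  then show "y \<in> P x" using a unfolding P_def by auto
qed

lemma P_R: "y \<in> P x \<Longrightarrow> (y,x) \<in> R" unfolding P_def by auto
lemma P_S: "y \<in> P x \<Longrightarrow> y \<in> S" using P_R R_S by blast

lemma T2: "z \<in> P x \<Longrightarrow> y \<in> P x \<Longrightarrow> (z,y) \<in> R \<Longrightarrow> f z y = f z x"
  using P_char by blast

lemma T1: assumes "x \<in> S" "x' \<in> S" "P x = P x'" "\<forall>z\<in>P x. f z x = f z x'"
  shows "x = x'"
proof (rule ccontr)
  assume ne: "x \<noteq> x'"
  have *: False if "(a,b) \<in> R" "P a = P b" "\<forall>z\<in>P a. f z a = f z b" for a b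
  proof -
    have "a \<in> P b"
    proof (subst P_char, intro conjI ballI impI)
      show "(a,b) \<in> R" by fact
      fix z assume "z \<in> P b" "(z,a) \<in> R"
      then show "f z a = f z b" using that by auto
    qed
    then have "a \<in> P a" using that by simp
    then show False using P_R R_irr by blast
  qed
  from R_total[OF assms(1,2) ne] show False
  proof
    assume "(x,x') \<in> R" then show False using * assms by blast
  next
    assume "(x',x) \<in> R" then show False using *[of x' x] assms by auto
  qed
qed

lemma T3: assumes "y \<in> P x" shows "P y = {z\<in>P x. (z,y) \<in> R}"
proof -
  have yx: "(y,x) \<in> R" using assms P_R by blast
  have key: "(z,y) \<in> R \<longrightarrow> (Q y z \<longleftrightarrow> Q x z)" for z
  proof (induction z rule: wf_induct[OF wfR])
    case (1 z)
    show ?case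
    proof
      assume zy: "(z,y) \<in> R"
      have "Q y z = (\<forall>w. (w,z) \<in> R \<longrightarrow> Q y w \<longrightarrow> f w z = f w y)" by (rule Q_eq)
      also have "\<dots> = (\<forall>w. (w,z) \<in> R \<longrightarrow> Q x w \<longrightarrow> f w z = f w x)"
      proof -
        have "(Q y w \<longrightarrow> f w z = f w y) = (Q x w \<longrightarrow> f w z = f w x)" if wz: "(w,z) \<in> R" for w
        proof -
          have wy: "(w,y) \<in> R" using R_trans wz zy by blast
          have e: "Q y w = Q x w" using 1 wz wy by blast
          have "Q x w \<Longrightarrow> f w y = f w x"
          proof -
            assume "Q x w"
            then have "w \<in> P x" unfolding P_def using R_trans wy yx by blast
            then show ?thesis using T2 assms wy by blast
          qed
          then show ?thesis using e by auto
        qed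
        then show ?thesis by blast
      qed
      also have "\<dots> = Q x z" by (rule Q_eq[symmetric])
      finally show "Q y z = Q x z" .
    qed
  qed
  have "z \<in> P y \<longleftrightarrow> z \<in> P x \<and> (z,y) \<in> R" for z
  proof
    assume "z \<in> P y"
    then have zy: "(z,y) \<in> R" and "Q y z" unfolding P_def by auto
    then have "Q x z" using key by blast
    moreover have "(z,x) \<in> R" using R_trans zy yx by blast
    ultimately show "z \<in> P x \<and> (z,y) \<in> R" using zy unfolding P_def by auto
  next
    assume "z \<in> P x \<and> (z,y) \<in> R"
    then have zy: "(z,y) \<in> R" and "Q x z" unfolding P_def by auto
    then have "Q y z" using key by blast
    then show "z \<in> P y" using zy unfolding P_def by auto
  qed
  then show ?thesis by blast
qed


lemma ofilter_img_bounded: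
  assumes CO: "Card_order Om" and inf: "\<not> finite (Field Om)"
    and ofl: "wo_rel.ofilter Om A" and small: "|A| <o Om"
  shows "\<exists>\<beta>\<in>Field Om. A \<subseteq> underS Om \<beta>"
proof -
  have wo: "wo_rel Om" using CO unfolding card_order_on_def wo_rel_def by auto
  from wo_rel.ofilter_underS_Field[OF wo] ofl
  have "(\<exists>a\<in>Field Om. A = underS Om a) \<or> A = Field Om" by blast
  moreover have "A \<noteq> Field Om"
  proof
    assume "A = Field Om"
    then have "|Field Om| <o Om" using small by simp
    moreover have "|Field Om| =o Om" using card_of_Field_ordIso[OF CO] .
    ultimately show False using not_ordLess_ordIso by blast
  qed
  ultimately show ?thesis by blast
qed

end

lemma card_of_Pow_mono': assumes "|A| \<le>o |B|" shows "|Pow A| \<le>o |Pow B|"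
proof -
  obtain g where g: "inj_on g A" "g ` A \<subseteq> B" using assms card_of_ordLeq[of A B] by blast
  have "inj_on (image g) (Pow A)" using inj_on_image_Pow[OF g(1)] .
  moreover have "image g ` Pow A \<subseteq> Pow B" using g(2) by auto
  ultimately show ?thesis using card_of_ordLeq by blast
qed


context er_tree
begin

lemma counting:
  assumes infK: "infinite K" and fK: "\<forall>x\<in>S. \<forall>y\<in>S. f x y \<in> K"
  shows "|{x\<in>S. |P x| \<le>o |K|}| \<le>o |Pow K|"
proof -
  define Om where "Om = cardSuc |K|"
  define N where "N = {x\<in>S. |P x| \<le>o |K|}"
  have CO: "Card_order Om" unfolding Om_def using cardSuc_Card_order card_of_Card_order by blast
  have WOm: "Well_order Om" using CO unfolding card_order_on_def by auto
  have KO: "|K| <o Om" unfolding Om_def using cardSuc_greater card_of_Card_order by blast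
  have FO: "|Field Om| =o Om" using card_of_Field_ordIso[OF CO] .
  have infO: "\<not> finite (Field Om)"
    unfolding Om_def using card_of_cardSuc_finite infK by blast
  have antiO: "antisym Om" using WOm unfolding well_order_on_def linear_order_on_def partial_order_on_def by auto
  have PS: "P x \<subseteq> S" for x using P_S by blast
  have FR: "Field (Restr W (P x)) = P x" for x
  proof
    show "Field (Restr W (P x)) \<subseteq> P x" unfolding Field_def by auto
    show "P x \<subseteq> Field (Restr W (P x))"
    proof
      fix a assume "a \<in> P x"
      then have "(a,a) \<in> Restr W (P x)" using W_refl PS by blast
      then show "a \<in> Field (Restr W (P x))" unfolding Field_def by blast
    qed
  qed
  have WR: "Well_order (Restr W (P x))" for x using Well_order_Restr[OF WO] .
  have emb_ex: "\<exists>e. embed (Restr W (P x)) Om e" if "x \<in> N" for x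
  proof -
    have "\<not> Om \<le>o Restr W (P x)"
    proof
      assume "Om \<le>o Restr W (P x)"
      then have "|Field Om| \<le>o |Field (Restr W (P x))|" by (rule card_of_mono2)
      moreover have "|P x| \<le>o |K|" using that unfolding N_def by simp
      ultimately have "|Field Om| \<le>o |K|" using FR ordLeq_transitive by metis
      then have "Om \<le>o |K|" using ordIso_ordLeq_trans[OF ordIso_symmetric[OF FO]] by blast
      then show False using KO not_ordLess_ordLeq by blast
    qed
    then have "Restr W (P x) <o Om" using ordLess_or_ordLeq[OF WR WOm] by blast
    then have "Restr W (P x) \<le>o Om" by (rule ordLess_imp_ordLeq)
    then show ?thesis unfolding ordLeq_def by blast
  qed
  define e where "e x = (SOME e. embed (Restr W (P x)) Om e)" for x
  have emb: "embed (Restr W (P x)) Om (e x)" if "x \<in> N" for x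
    unfolding e_def using someI_ex[OF emb_ex[OF that]] .
  have E1: "e x z \<in> Field Om" if "x \<in> N" "z \<in> P x" for x z
    using embed_in_Field[OF emb[OF that(1)]] FR that(2) by blast
  have E2: "inj_on (e x) (P x)" if "x \<in> N" for x
    using embed_inj_on[OF WR emb[OF that]] FR by simp
  have E3: "(e x w, e x z) \<in> Om \<and> e x w \<noteq> e x z" if "x \<in> N" "z \<in> P x" "w \<in> P x" "(w,z) \<in> R" for x z w
  proof
    have "(w,z) \<in> Restr W (P x)" using that R_W by blast
    then show "(e x w, e x z) \<in> Om" using embed_compat[OF emb[OF that(1)]] unfolding compat_def by blast
    show "e x w \<noteq> e x z" using inj_on_contraD[OF E2[OF that(1)] _ that(3) that(2)] that(4) R_irr by blast
  qed
  have E4: "\<exists>u\<in>P x. (u,z) \<in> R \<and> b = e x u"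
    if "x \<in> N" "z \<in> P x" "(b, e x z) \<in> Om" "b \<noteq> e x z" for x z b
  proof -
    have "z \<in> Field (Restr W (P x))" using FR that(2) by simp
    from embed_underS[OF WR emb[OF that(1)] this]
    have bij: "bij_betw (e x) (underS (Restr W (P x)) z) (underS Om (e x z))" .
    have "b \<in> underS Om (e x z)" using that unfolding underS_def by auto
    then obtain u where u: "u \<in> underS (Restr W (P x)) z" "b = e x u"
      using bij unfolding bij_betw_def by blast
    then have "u \<in> P x" "(u,z) \<in> W" "u \<noteq> z" unfolding underS_def by auto
    then show ?thesis using u W_R by blast
  qed
  have E5: "\<exists>\<beta>\<in>Field Om. e x ` P x \<subseteq> underS Om \<beta>" if "x \<in> N" for x
  proof (rule ofilter_img_bounded[OF CO infO])
    show "wo_rel.ofilter Om (e x ` P x)"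
      using embed_Field_ofilter[OF WR WOm emb[OF that]] FR by simp
    have "|P x| \<le>o |K|" using that unfolding N_def by simp
    then have "|e x ` P x| \<le>o |K|" using ordLeq_transitive[OF card_of_image] by blast
    then show "|e x ` P x| <o Om" using ordLeq_ordLess_trans[OF _ KO] by blast
  qed
  define code where "code x = (\<lambda>z. (e x z, f z x)) ` P x" for x
  have claimA: "\<forall>z\<in>P x. z \<in> P x' \<and> e x z = e x' z"
    if xN: "x \<in> N" and xN': "x' \<in> N" and ceq: "code x = code x'" for x x'
  proof -
    have "z \<in> P x \<longrightarrow> z \<in> P x' \<and> e x z = e x' z" for z
    proof (induction z rule: wf_induct[OF wfR])
      case (1 z)
      show ?case
      proof
        assume zP: "z \<in> P x"
        have "(e x z, f z x) \<in> code x" unfolding code_def using zP by (rule rev_image_eqI) simp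
        then have "(e x z, f z x) \<in> code x'" using ceq by simp
        then obtain z' where z'0: "z' \<in> P x'" "(e x z, f z x) = (e x' z', f z' x')"
          unfolding code_def by blast
        then have z': "z' \<in> P x'" "e x z = e x' z'" "f z x = f z' x'" by auto
        have setsub1: "w \<in> P x' \<and> (w,z') \<in> R" if "w \<in> P x" "(w,z) \<in> R" for w
        proof -
          have IH: "w \<in> P x'" "e x w = e x' w" using 1 that by auto
          have o1: "(e x' w, e x' z') \<in> Om" "e x' w \<noteq> e x' z'"
            using E3[OF xN zP that(1) that(2)] IH z' by auto
          have "w \<noteq> z'" using o1 by auto
          moreover have "(z',w) \<notin> R"
          proof
            assume "(z',w) \<in> R"
            then have "(e x' z', e x' w) \<in> Om" using E3[OF xN' IH(1) z'(1)] by auto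
            then show False using o1 antiO unfolding antisym_def by blast
          qed
          ultimately have "(w,z') \<in> R" using R_total PS IH(1) z'(1) by blast
          then show ?thesis using IH by blast
        qed
        have setsub2: "w \<in> P x \<and> (w,z) \<in> R" if "w \<in> P x'" "(w,z') \<in> R" for w
        proof -
          have "(e x' w, e x' z') \<in> Om \<and> e x' w \<noteq> e x' z'" using E3[OF xN' z'(1) that] .
          then have "(e x' w, e x z) \<in> Om" "e x' w \<noteq> e x z" using z' by auto
          then obtain u where u: "u \<in> P x" "(u,z) \<in> R" "e x' w = e x u" using E4[OF xN zP] by blast
          have "u \<in> P x'" "e x u = e x' u" using 1 u by auto
          then have "w = u" using inj_onD[OF E2[OF xN'] _ that(1)] u(3) by simp
          then show ?thesis using u by simp
        qed
        have PzPz': "P z = P z'"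
        proof (rule Set.set_eqI)
          fix w show "w \<in> P z \<longleftrightarrow> w \<in> P z'"
            unfolding T3[OF zP] T3[OF z'(1)] using setsub1[of w] setsub2[of w] by blast
        qed
        have col: "f w z = f w z'" if "w \<in> P z" for w
        proof -
          have w1: "w \<in> P x" "(w,z) \<in> R" using that T3[OF zP] by auto
          have w2: "w \<in> P x'" "(w,z') \<in> R" using setsub1[OF w1] by auto
          have IH: "e x w = e x' w" using 1 w1 by auto
          have "(e x w, f w x) \<in> code x" unfolding code_def using w1(1) by (rule rev_image_eqI) simp
          then have "(e x w, f w x) \<in> code x'" using ceq by simp
          then obtain u where u0: "u \<in> P x'" "(e x w, f w x) = (e x' u, f u x')"
            unfolding code_def by blast
          then have u: "u \<in> P x'" "e x w = e x' u" "f w x = f u x'" by auto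
          have "u = w" using inj_onD[OF E2[OF xN'] _ u(1) w2(1)] u(2) IH by simp
          then have "f w x = f w x'" using u by simp
          moreover have "f w z = f w x" using T2 w1 zP by blast
          moreover have "f w z' = f w x'" using T2 w2 z'(1) by blast
          ultimately show ?thesis by simp
        qed
        have "z = z'" using T1[of z z'] PS zP z'(1) PzPz' col by blast
        then show "z \<in> P x' \<and> e x z = e x' z" using z' by simp
      qed
    qed
    then show ?thesis by blast
  qed
  have inj_code: "inj_on code N"
  proof (rule inj_onI)
    fix x x' assume xN: "x \<in> N" and xN': "x' \<in> N" and ceq: "code x = code x'"
    have A1: "\<forall>z\<in>P x. z \<in> P x' \<and> e x z = e x' z" using claimA[OF xN xN' ceq] .
    have A2: "\<forall>z\<in>P x'. z \<in> P x \<and> e x' z = e x z" using claimA[OF xN' xN ceq[symmetric]] .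
    have PP: "P x = P x'" using A1 A2 by blast
    have "f z x = f z x'" if zP: "z \<in> P x" for z
    proof -
      have "(e x z, f z x) \<in> code x" unfolding code_def using zP by (rule rev_image_eqI) simp
      then have "(e x z, f z x) \<in> code x'" using ceq by simp
      then obtain u where u0: "u \<in> P x'" "(e x z, f z x) = (e x' u, f u x')"
        unfolding code_def by blast
      then have u: "u \<in> P x'" "e x z = e x' u" "f z x = f u x'" by auto
      have "u = z" using inj_onD[OF E2[OF xN'] _ u(1)] u(2) A1 zP by simp
      then show ?thesis using u by simp
    qed
    then show "x = x'" using T1[of x x'] xN xN' PP unfolding N_def by blast
  qed
  define TT where "TT = (\<Union>\<beta>\<in>Field Om. Pow (underS Om \<beta> \<times> K))"
  have code_TT: "code ` N \<subseteq> TT"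
  proof
    fix c assume "c \<in> code ` N"
    then obtain x where xN: "x \<in> N" and c: "c = code x" by blast
    obtain \<beta> where \<beta>: "\<beta> \<in> Field Om" "e x ` P x \<subseteq> underS Om \<beta>" using E5[OF xN] by blast
    have "code x \<subseteq> underS Om \<beta> \<times> K"
    proof
      fix p assume "p \<in> code x"
      then obtain z where z: "z \<in> P x" "p = (e x z, f z x)" unfolding code_def by auto
      have "x \<in> S" using xN unfolding N_def by auto
      then have "f z x \<in> K" using fK PS z(1) by blast
      then show "p \<in> underS Om \<beta> \<times> K" using z \<beta> by auto
    qed
    then show "c \<in> TT" unfolding TT_def c using \<beta>(1) by blast
  qed
  have TT_small: "|TT| \<le>o |Pow K|"
    unfolding TT_def
  proof (rule card_of_UNION_ordLeq_infinite)
    show "\<not> finite (Pow K)" using infK by simp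
    have "Om \<le>o |Pow K|" unfolding Om_def
      using cardSuc_least[OF card_of_Card_order card_of_Card_order card_of_Pow] .
    then show "|Field Om| \<le>o |Pow K|" using ordIso_ordLeq_trans[OF FO] by blast
    show "\<forall>\<beta>\<in>Field Om. |Pow (underS Om \<beta> \<times> K)| \<le>o |Pow K|"
    proof
      fix \<beta> assume "\<beta> \<in> Field Om"
      then have "|underS Om \<beta>| <o Om" by (rule card_of_underS[OF CO])
      then have u: "|underS Om \<beta>| \<le>o |K|" unfolding Om_def
        using cardSuc_ordLeq_ordLess[OF card_of_Card_order card_of_Card_order] by blast
      have "|underS Om \<beta> \<times> K| \<le>o |K|"
        using card_of_Sigma_ordLeq_infinite[OF infK u, of "\<lambda>_. K"] ordLeq_reflexive[OF card_of_Well_order] by auto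
      then show "|Pow (underS Om \<beta> \<times> K)| \<le>o |Pow K|" by (rule card_of_Pow_mono')
    qed
  qed
  have "|N| \<le>o |TT|" using inj_code code_TT card_of_ordLeq[of N TT] by blast
  then show ?thesis using ordLeq_transitive[OF _ TT_small] unfolding N_def by blast
qed

end

lemma nat_ramsey_ordered:
  fixes col :: "nat \<Rightarrow> nat \<Rightarrow> nat"
  assumes "\<forall>m n. m < n \<longrightarrow> col m n < s"
  shows "\<exists>\<sigma>::nat\<Rightarrow>nat. strict_mono \<sigma> \<and> (\<exists>t<s. \<forall>m n. m < n \<longrightarrow> col (\<sigma> m) (\<sigma> n) = t)"
proof -
  define F where "F X = col (Min X) (Max X)" for X :: "nat set"
  have Fxy: "F {x,y} = col (min x y) (max x y)" for x y unfolding F_def by simp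
  have "\<forall>x\<in>UNIV. \<forall>y\<in>UNIV. x \<noteq> y \<longrightarrow> F {x,y} < s"
    using assms unfolding Fxy by (auto simp: min_def max_def)
  from Ramsey2[OF infinite_UNIV_nat this] obtain Y t where
    Y: "infinite Y" "t < s" "\<forall>x\<in>Y. \<forall>y\<in>Y. x \<noteq> y \<longrightarrow> F {x,y} = t" by blast
  have sm: "strict_mono (enumerate Y)" using strict_mono_enumerate[OF Y(1)] .
  have "col (enumerate Y m) (enumerate Y n) = t" if "m < n" for m n
  proof -
    have lt: "enumerate Y m < enumerate Y n" using sm that unfolding strict_mono_def by blast
    have "F {enumerate Y m, enumerate Y n} = t" using Y(3) enumerate_in_set[OF Y(1)] lt by auto
    then show ?thesis using lt unfolding Fxy by simp
  qed
  then show ?thesis using sm Y(2) by blast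
qed

definition bprod :: "('a,'b) monoid_scheme \<Rightarrow> (nat \<Rightarrow> 'a) \<Rightarrow> nat \<Rightarrow> nat \<Rightarrow> 'a" where
  "bprod G b m n = foldr (\<lambda>i acc. b (m+i) \<otimes>\<^bsub>G\<^esub> acc) [0..<Suc n] \<one>\<^bsub>G\<^esub>"

lemma bprod_0: "bprod G b m 0 = b m \<otimes>\<^bsub>G\<^esub> \<one>\<^bsub>G\<^esub>" by (simp add: bprod_def)

lemma bprod_Suc: "bprod G b m (Suc n) = b m \<otimes>\<^bsub>G\<^esub> bprod G b (Suc m) n"
proof -
  have "[0..<Suc (Suc n)] = 0 # map Suc [0..<Suc n]"
    by (simp add: map_Suc_upt upt_conv_Cons del: upt_Suc)
  then show ?thesis by (simp add: bprod_def foldr_map o_def del: upt_Suc)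
qed

lemma (in group) bprod_tele:
  assumes h: "\<And>i. h i \<in> carrier G" and b: "\<And>i. b i = inv (h i) \<otimes> h (Suc i)"
  shows "bprod G b m n = inv (h m) \<otimes> h (Suc (m+n))"
proof (induction n arbitrary: m)
  case 0
  then show ?case using h by (simp add: bprod_0 b)
next
  case (Suc n)
  have "bprod G b m (Suc n) = (inv (h m) \<otimes> h (Suc m)) \<otimes> (inv (h (Suc m)) \<otimes> h (Suc (Suc m + n)))"
    using Suc.IH[of "Suc m"] by (simp add: bprod_Suc b[of m])
  also have "\<dots> = inv (h m) \<otimes> (h (Suc m) \<otimes> (inv (h (Suc m)) \<otimes> h (Suc (Suc m + n))))"
    using h by (simp add: m_assoc)
  also have "h (Suc m) \<otimes> (inv (h (Suc m)) \<otimes> h (Suc (Suc m + n))) = h (Suc (Suc m + n))"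
    using h by (simp add: m_assoc[symmetric])
  finally show ?case by simp
qed

lemma (in group) thin:
  fixes hh :: "nat \<Rightarrow> 'a"
  assumes inj: "inj hh" and hc: "range hh \<subseteq> carrier G"
  shows "\<exists>j::nat\<Rightarrow>nat. strict_mono j \<and> inj (\<lambda>n. inv (hh (j n)) \<otimes> hh (j (Suc n)))"
proof -
  define F where "F x = (\<lambda>(p,q). inv (hh p) \<otimes> hh q) ` {(p,q). p < q \<and> q \<le> x}" for x
  have finF: "finite (F x)" for x
  proof -
    have "{(p,q). p < q \<and> q \<le> x} \<subseteq> {..x} \<times> {..x}" by auto
    then have "finite {(p,q). p < q \<and> q \<le> x}" by (rule finite_subset) (simp add: finite_cartesian_product)
    then show ?thesis unfolding F_def by simp
  qed
  have ex: "\<exists>t. x < t \<and> inv (hh x) \<otimes> hh t \<notin> F x" for x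
  proof (rule ccontr)
    assume "\<not> ?thesis"
    then have sub: "(\<lambda>t. inv (hh x) \<otimes> hh t) ` {x<..} \<subseteq> F x" by auto
    have "inj_on (\<lambda>t. inv (hh x) \<otimes> hh t) {x<..}"
    proof (rule inj_onI)
      fix a b assume "inv (hh x) \<otimes> hh a = inv (hh x) \<otimes> hh b"
      then have "hh a = hh b" using hc by (simp add: subset_iff)
      then show "a = b" using inj unfolding inj_def by blast
    qed
    moreover have "finite ((\<lambda>t. inv (hh x) \<otimes> hh t) ` {x<..})" using finite_subset[OF sub finF] .
    ultimately have "finite {x<..}" using finite_imageD by blast
    then obtain k where "{x<..} \<subseteq> {..<k}" using finite_nat_bounded by blast
    moreover have "Suc (max x k) \<in> {x<..}" by simp
    ultimately have "Suc (max x k) < k" by (rule subsetD[THEN lessThan_iff[THEN iffD1]])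
    then show False by simp
  qed
  define s where "s x = (LEAST t. x < t \<and> inv (hh x) \<otimes> hh t \<notin> F x)" for x
  have s: "x < s x" "inv (hh x) \<otimes> hh (s x) \<notin> F x" for x
    using LeastI_ex[OF ex[of x]] unfolding s_def by auto
  define j where "j n = (s ^^ n) 0" for n
  have jS: "j (Suc n) = s (j n)" for n by (simp add: j_def)
  have sm: "strict_mono j" unfolding strict_mono_Suc_iff using jS s by simp
  define g where "g n = inv (hh (j n)) \<otimes> hh (j (Suc n))" for n
  have neq: "g m \<noteq> g n" if "m < n" for m n
  proof -
    have "j (Suc m) \<le> j n" using sm that by (simp add: strict_mono_less_eq Suc_leI)
    moreover have "j m < j (Suc m)" using sm by (simp add: strict_mono_less)
    ultimately have "(j m, j (Suc m)) \<in> {(p,q). p < q \<and> q \<le> j n}" by simp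
    then have "g m \<in> F (j n)" unfolding g_def F_def by (rule rev_image_eqI) simp
    moreover have "g n \<notin> F (j n)" unfolding g_def jS using s by simp
    ultimately show ?thesis by auto
  qed
  have "inj g"
  proof (rule injI)
    fix m n assume "g m = g n"
    then show "m = n" using neq by (metis linorder_neqE_nat)
  qed
  then have "inj (\<lambda>n. inv (hh (j n)) \<otimes> hh (j (Suc n)))" unfolding g_def .
  with sm show ?thesis by (intro exI[of _ j] conjI)
qed

lemma finite_le_infinite: assumes "finite A" "\<not> finite B" shows "|A| \<le>o |B|"
proof -
  have "|A| <o |B| \<or> |B| \<le>o |A|" using ordLess_or_ordLeq[OF card_of_Well_order card_of_Well_order] .
  then show ?thesis
  proof
    assume "|A| <o |B|" then show ?thesis by (rule ordLess_imp_ordLeq)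
  next
    assume "|B| \<le>o |A|" then have "finite B" using card_of_ordLeq_finite assms(1) by blast
    then show ?thesis using assms(2) by simp
  qed
qed

lemma ER:
  fixes S :: "'a set" and K :: "'k set" and f :: "'a \<Rightarrow> 'a \<Rightarrow> 'k"
  assumes infK: "infinite K" and big: "\<not> |S| \<le>o |Pow K|" and fK: "\<forall>x\<in>S. \<forall>y\<in>S. f x y \<in> K"
  shows "\<exists>hh::nat\<Rightarrow>'a. inj hh \<and> range hh \<subseteq> S \<and> (\<exists>k. \<forall>m n. m < n \<longrightarrow> f (hh m) (hh n) = k)"
proof -
  obtain W where wo: "well_order_on S W" using well_order_on by blast
  interpret er_tree S W f by unfold_locales (rule wo)
  have cnt: "|{x\<in>S. |P x| \<le>o |K|}| \<le>o |Pow K|" using counting[OF infK fK] .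
  have "\<exists>x\<in>S. \<not> |P x| \<le>o |K|"
  proof (rule ccontr)
    assume "\<not> ?thesis" then have "{x\<in>S. |P x| \<le>o |K|} = S" by auto
    then show False using cnt big by simp
  qed
  then obtain x where xS: "x \<in> S" and Pbig: "\<not> |P x| \<le>o |K|" by blast
  have "\<exists>k\<in>K. infinite {z\<in>P x. f z x = k}"
  proof (rule ccontr)
    assume "\<not> ?thesis"
    then have fin: "\<forall>k\<in>K. finite {z\<in>P x. f z x = k}" by blast
    have eq: "P x = (\<Union>k\<in>K. {z\<in>P x. f z x = k})" using fK xS P_S by blast
    have "|\<Union>k\<in>K. {z\<in>P x. f z x = k}| \<le>o |K|"
    proof (rule card_of_UNION_ordLeq_infinite[OF infK])
      show "|K| \<le>o |K|" by (rule ordLeq_reflexive[OF card_of_Well_order])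
      show "\<forall>k\<in>K. |{z \<in> P x. f z x = k}| \<le>o |K|" using fin finite_le_infinite infK by blast
    qed
    then show False using Pbig eq by simp
  qed
  then obtain k where Hinf: "infinite {z\<in>P x. f z x = k}" by blast
  define H where "H = {z\<in>P x. f z x = k}"
  obtain u :: "nat \<Rightarrow> 'a" where u: "inj u" "range u \<subseteq> H"
    using infinite_countable_subset[OF Hinf[folded H_def]] by blast
  define col where "col m n = (if (u m, u n) \<in> R then 0 else 1::nat)" for m n
  have "\<forall>m n. m < n \<longrightarrow> col m n < 2" unfolding col_def by simp
  from nat_ramsey_ordered[OF this] obtain \<sigma> :: "nat \<Rightarrow> nat" and t where sm: "strict_mono \<sigma>" and t: "t < 2"
    and hom: "\<forall>m n. m < n \<longrightarrow> col (\<sigma> m) (\<sigma> n) = t" by blast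
  define hh where "hh i = u (\<sigma> i)" for i
  have hhH: "hh i \<in> H" for i using u unfolding hh_def by auto
  have hhS: "hh i \<in> S" for i using hhH P_S unfolding H_def by blast
  have injhh: "inj hh"
  proof (rule injI)
    fix a b assume "hh a = hh b"
    then have "\<sigma> a = \<sigma> b" using u(1) unfolding hh_def inj_def by blast
    then show "a = b" using strict_mono_eq[OF sm] by blast
  qed
  have neq: "hh m \<noteq> hh n" if "m \<noteq> n" for m n using injhh that unfolding inj_def by blast
  show ?thesis
  proof (cases "t = 0")
    case True
    have "f (hh m) (hh n) = k" if "m < n" for m n
    proof -
      have "(hh m, hh n) \<in> R" using hom that True unfolding col_def hh_def by (auto split: if_splits)
      then have "f (hh m) (hh n) = f (hh m) x" using T2 hhH unfolding H_def by blast
      then show ?thesis using hhH unfolding H_def by simp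
    qed
    then have "\<forall>m n. m < n \<longrightarrow> f (hh m) (hh n) = k" by blast
    moreover have "range hh \<subseteq> S" using hhS by blast
    ultimately show ?thesis using injhh by (intro exI[of _ hh]) blast
  next
    case False
    have "(hh (Suc i), hh i) \<in> R" for i
    proof -
      have "(hh i, hh (Suc i)) \<notin> R" using hom False unfolding col_def hh_def by (auto split: if_splits)
      then show ?thesis using R_total[OF hhS hhS neq[of i "Suc i"]] by auto
    qed
    then have "\<exists>g. \<forall>i. (g (Suc i), g i) \<in> R" by blast
    then show ?thesis using wfR wf_iff_no_infinite_down_chain by blast
  qed
qed

locale cord =
  fixes r :: "'i rel"
  assumes CO: "Card_order r" and inf: "\<not> finite (Field r)"
begin

lemma WOr: "Well_order r" using CO unfolding card_order_on_def by auto
lemma wor: "wo_rel r" using WOr unfolding wo_rel_def by auto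
lemma transr: "trans r" using wo_rel.TRANS[OF wor] .
lemma antisymr: "antisym r" using wo_rel.ANTISYM[OF wor] .
lemma totr: "a \<in> Field r \<Longrightarrow> b \<in> Field r \<Longrightarrow> (a,b) \<in> r \<or> (b,a) \<in> r"
  using wo_rel.TOTALS[OF wor] by blast
lemma reflr: "a \<in> Field r \<Longrightarrow> (a,a) \<in> r"
  using wo_rel.REFL[OF wor] unfolding refl_on_def by blast
lemma inField: "(a,b) \<in> r \<Longrightarrow> a \<in> Field r \<and> b \<in> Field r" unfolding Field_def by blast

lemma noMax: "a \<in> Field r \<Longrightarrow> AboveS r {a} \<noteq> {}"
  using infinite_Card_order_limit[OF CO inf] unfolding AboveS_def by blast

lemma suc1: assumes "a \<in> Field r"
  shows "osucc r a \<in> Field r" "(a, osucc r a) \<in> r" "osucc r a \<noteq> a"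
proof -
  have sub: "{a} \<subseteq> Field r" using assms by simp
  show "osucc r a \<in> Field r" unfolding osucc_def using wo_rel.suc_inField[OF wor sub noMax[OF assms]] .
  show "(a, osucc r a) \<in> r" "osucc r a \<noteq> a" unfolding osucc_def
    using wo_rel.suc_greater[OF wor sub noMax[OF assms]] by auto
qed

lemma suc_least: assumes "a \<in> Field r" "b \<in> Field r" "(a,b) \<in> r" "a \<noteq> b"
  shows "(osucc r a, b) \<in> r"
proof -
  have "b \<in> AboveS r {a}" using assms unfolding AboveS_def by auto
  then show ?thesis unfolding osucc_def by (rule wo_rel.suc_least_AboveS[OF wor])
qed

abbreviation it where "it m a \<equiv> (osucc r ^^ m) a"

lemma it_Field: "a \<in> Field r \<Longrightarrow> it m a \<in> Field r"
  by (induction m) (auto simp: suc1)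

lemma it_mono: "a \<in> Field r \<Longrightarrow> (a, it m a) \<in> r"
proof (induction m)
  case 0 then show ?case using reflr by simp
next
  case (Suc m)
  have "(it m a, it (Suc m) a) \<in> r" using suc1(2)[OF it_Field[OF Suc.prems]] by simp
  then show ?case using Suc transr unfolding trans_def by blast
qed

lemma it_strict: assumes "a \<in> Field r" "p < q" shows "(it p a, it q a) \<in> r \<and> it p a \<noteq> it q a"
proof -
  obtain d where q: "q = Suc (p + d)" using assms(2) less_iff_Suc_add by auto
  have f: "it p a \<in> Field r" using it_Field[OF assms(1)] .
  have "it q a = it d (it (Suc p) a)"
  proof -
    have "q = d + Suc p" using q by simp
    then show ?thesis by (simp only: funpow_add comp_apply)
  qed
  moreover have "it (Suc p) a = osucc r (it p a)" by simp
  moreover have s: "(it p a, osucc r (it p a)) \<in> r" "osucc r (it p a) \<noteq> it p a" using suc1[OF f] by auto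
  moreover have "(osucc r (it p a), it d (osucc r (it p a))) \<in> r" using it_mono suc1(1)[OF f] by blast
  ultimately have 1: "(it p a, it q a) \<in> r" "(osucc r (it p a), it q a) \<in> r" using transr unfolding trans_def by metis+
  have "it p a \<noteq> it q a"
  proof
    assume "it p a = it q a"
    then have "(osucc r (it p a), it p a) \<in> r" using 1 by simp
    then show False using s antisymr unfolding antisym_def by blast
  qed
  then show ?thesis using 1 by blast
qed

lemma it_inj: "a \<in> Field r \<Longrightarrow> it p a = it q a \<Longrightarrow> p = q"
  using it_strict by (metis nat_neq_iff)

lemma between: "x \<in> Field r \<Longrightarrow> (x,y) \<in> r \<Longrightarrow> (y, it p x) \<in> r \<Longrightarrow> \<exists>j\<le>p. y = it j x"
proof (induction p arbitrary: x)
  case 0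
  then show ?case using antisymr unfolding antisym_def by auto
next
  case (Suc p)
  show ?case
  proof (cases "y = x")
    case True then show ?thesis by (intro exI[of _ 0]) simp
  next
    case False
    have yF: "y \<in> Field r" using Suc.prems(2) inField by blast
    have s: "osucc r x \<in> Field r" using suc1(1)[OF Suc.prems(1)] .
    have "(osucc r x, y) \<in> r" using suc_least[OF Suc.prems(1) yF Suc.prems(2)] False by auto
    moreover have "(y, it p (osucc r x)) \<in> r" using Suc.prems(3) by (simp add: funpow_Suc_right del: funpow.simps)
    ultimately obtain j where "j \<le> p" "y = it j (osucc r x)" using Suc.IH[OF s] by blast
    then show ?thesis by (intro exI[of _ "Suc j"]) (simp add: funpow_Suc_right del: funpow.simps)
  qed
qed

definition dl :: "'i \<Rightarrow> 'i" where
  "dl a = wo_rel.minim r {d \<in> Field r. \<exists>m. it m d = a}"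
definition mm :: "'i \<Rightarrow> nat" where
  "mm a = (SOME m. it m (dl a) = a)"

lemma dl_props: assumes "a \<in> Field r"
  shows "dl a \<in> Field r" "it (mm a) (dl a) = a"
    "\<And>d m. d \<in> Field r \<Longrightarrow> it m d = a \<Longrightarrow> (dl a, d) \<in> r"
proof -
  let ?B = "{d \<in> Field r. \<exists>m. it m d = a}"
  have sub: "?B \<subseteq> Field r" by blast
  have ne: "?B \<noteq> {}" using assms by (intro ex_in_conv[THEN iffD1] exI[of _ a]) (auto intro: exI[of _ 0])
  have "dl a \<in> ?B" unfolding dl_def using wo_rel.minim_in[OF wor sub ne] .
  then show "dl a \<in> Field r" "it (mm a) (dl a) = a" unfolding mm_def by (auto intro: someI_ex)
  show "\<And>d m. d \<in> Field r \<Longrightarrow> it m d = a \<Longrightarrow> (dl a, d) \<in> r"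
    unfolding dl_def using wo_rel.minim_least[OF wor sub] by blast
qed

lemma dl_shift: assumes aF: "a \<in> Field r"
  shows "dl (it i a) = dl a \<and> mm (it i a) = mm a + i"
proof -
  let ?a' = "it i a"
  have a'F: "?a' \<in> Field r" using it_Field[OF aF] .
  define d where "d = dl ?a'"
  define d' where "d' = dl a"
  have d'F: "d' \<in> Field r" and d'a: "it (mm a) d' = a" using dl_props[OF aF] unfolding d'_def by auto
  have dF: "d \<in> Field r" and da': "it (mm ?a') d = ?a'" using dl_props[OF a'F] unfolding d_def by auto
  have "it (i + mm a) d' = ?a'" using d'a by (simp add: funpow_add)
  then have dd': "(d, d') \<in> r" using dl_props(3)[OF a'F d'F] unfolding d_def by blast
  have "(d', a) \<in> r" using it_mono[OF d'F] d'a by metis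
  moreover have "(a, ?a') \<in> r" using it_mono[OF aF] .
  ultimately have "(d', ?a') \<in> r" using transr unfolding trans_def by blast
  then have "(d', it (mm ?a') d) \<in> r" using da' by simp
  then obtain j where j: "d' = it j d" using between[OF dF dd'] by blast
  have "it (mm a + j) d = a" using d'a j by (simp add: funpow_add)
  then have "(d', d) \<in> r" using dl_props(3)[OF aF dF] unfolding d'_def by blast
  then have eq: "d = d'" using dd' antisymr unfolding antisym_def by blast
  have "it (mm ?a') d = it (mm a + i) d" using da' d'a eq by (simp add: funpow_add add.commute)
  then have "mm ?a' = mm a + i" using it_inj[OF dF] by blast
  then show ?thesis using eq unfolding d_def d'_def by simp
qed

lemma assemble:
  fixes G :: "('a,'b) monoid_scheme" and B :: "'i \<Rightarrow> nat \<Rightarrow> 'a"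
  assumes Binj: "\<forall>d\<in>Field r. inj (B d)" and Bc: "\<forall>d\<in>Field r. range (B d) \<subseteq> carrier G"
    and Bcol: "\<forall>d\<in>Field r. \<forall>m n. c (bprod G (B d) m n) = k"
    and Bdisj: "\<forall>a\<in>Field r. \<forall>a'\<in>Field r. dl a \<noteq> dl a' \<longrightarrow> range (B (dl a)) \<inter> range (B (dl a')) = {}"
  shows "\<exists>g. g \<in> Field r \<rightarrow> carrier G \<and> inj_on g (Field r) \<and> (\<exists>k. \<forall>x\<in>AFP G r g. c x = k)"
proof -
  define g where "g a = B (dl a) (mm a)" for a
  have gc: "g \<in> Field r \<rightarrow> carrier G" unfolding g_def using Bc dl_props(1) by blast
  have gi: "inj_on g (Field r)"
  proof (rule inj_onI)
    fix a a' assume aF: "a \<in> Field r" and a'F: "a' \<in> Field r" and eq: "g a = g a'"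
    have "dl a = dl a'"
    proof (rule ccontr)
      assume "dl a \<noteq> dl a'"
      then have "range (B (dl a)) \<inter> range (B (dl a')) = {}" using Bdisj aF a'F by blast
      then show False using eq unfolding g_def by blast
    qed
    moreover then have "mm a = mm a'" using eq Binj dl_props(1)[OF aF] unfolding g_def inj_def by metis
    ultimately show "a = a'" using dl_props(2)[OF aF] dl_props(2)[OF a'F] by metis
  qed
  have "c x = k" if xA: "x \<in> AFP G r g" for x
  proof -
    obtain a n where x: "x = adj_prod G r g a n" and ib: "indices_below r a n"
      using xA unfolding AFP_def by blast
    have aF: "a \<in> Field r" using ib unfolding indices_below_def by blast
    have "adj_prod G r g a n = bprod G (B (dl a)) (mm a) n"
      unfolding adj_prod_def bprod_def
    proof (rule foldr_cong)
      fix i acc assume "i \<in> set [0..<Suc n]"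
      have "g (oplusn r a i) = B (dl a) (mm a + i)"
        unfolding g_def oplusn_def using dl_shift[OF aF] by simp
      then show "g (oplusn r a i) \<otimes>\<^bsub>G\<^esub> acc = B (dl a) (mm a + i) \<otimes>\<^bsub>G\<^esub> acc" by simp
    qed simp_all
    then show ?thesis using x Bcol dl_props(1)[OF aF] by simp
  qed
  then show ?thesis using gc gi by blast
qed

end

lemma card_Un_le: assumes "\<not> finite C" "|A| \<le>o |C|" "|B| \<le>o |C|" shows "|A \<union> B| \<le>o |C|"
proof -
  have eq: "A \<union> B = (\<Union>i\<in>(UNIV::bool set). if i then A else B)" by auto
  have "|\<Union>i\<in>(UNIV::bool set). if i then A else B| \<le>o |C|"
  proof (rule card_of_UNION_ordLeq_infinite[OF assms(1)])
    show "|UNIV::bool set| \<le>o |C|" by (rule finite_le_infinite[OF _ assms(1)]) simp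
    show "\<forall>i\<in>UNIV. |if i then A else B| \<le>o |C|" using assms by simp
  qed
  then show ?thesis using eq by simp
qed

context group
begin

lemma gl1: "x \<in> carrier G \<Longrightarrow> z \<in> carrier G \<Longrightarrow> x \<otimes> (inv x \<otimes> z) = z"
  by (simp add: m_assoc[symmetric])

lemma gl2: "y \<in> carrier G \<Longrightarrow> z \<in> carrier G \<Longrightarrow> y \<otimes> inv (inv z \<otimes> y) = z"
  by (simp add: inv_mult_group gl1)

lemma block_of_hom:
  fixes hh :: "nat \<Rightarrow> 'a" and c :: "'a \<Rightarrow> 'k"
  assumes inj: "inj hh" and hc: "range hh \<subseteq> carrier G"
    and hom: "\<forall>m n. m < n \<longrightarrow> c (inv (hh m) \<otimes> hh n) = k"
  shows "\<exists>b. inj b \<and> range b \<subseteq> carrier G \<and> (\<forall>n. \<exists>p q. p \<noteq> q \<and> b n = inv (hh p) \<otimes> hh q)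
     \<and> (\<forall>m n. c (bprod G b m n) = k)"
proof -
  obtain j :: "nat \<Rightarrow> nat" where sm: "strict_mono j" and ij: "inj (\<lambda>n. inv (hh (j n)) \<otimes> hh (j (Suc n)))"
    using thin[OF inj hc] by blast
  define b where "b n = inv (hh (j n)) \<otimes> hh (j (Suc n))" for n
  have hcar: "hh i \<in> carrier G" for i using hc by blast
  have bc: "range b \<subseteq> carrier G" unfolding b_def using hcar by auto
  have bf: "\<forall>n. \<exists>p q. p \<noteq> q \<and> b n = inv (hh p) \<otimes> hh q"
  proof
    fix n have "j n \<noteq> j (Suc n)" using sm unfolding strict_mono_def by (metis lessI less_irrefl)
    then show "\<exists>p q. p \<noteq> q \<and> b n = inv (hh p) \<otimes> hh q" unfolding b_def by blast
  qed
  have col: "c (bprod G b m n) = k" for m n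
  proof -
    have "bprod G b m n = inv (hh (j m)) \<otimes> hh (j (Suc (m+n)))"
      using bprod_tele[of "\<lambda>i. hh (j i)" b] hcar unfolding b_def by blast
    moreover have "j m < j (Suc (m+n))" using sm unfolding strict_mono_def by simp
    ultimately show ?thesis using hom by simp
  qed
  have "inj b" using ij unfolding b_def .
  then show ?thesis using bc bf col by (intro exI[of _ b]) blast
qed

lemma newblock:
  fixes K :: "'k set" and c :: "'a \<Rightarrow> 'k" and U :: "'a set"
  assumes infK: "infinite K" and cK: "c \<in> carrier G \<rightarrow> K" and U: "|U| \<le>o |Pow K|"
    and big: "\<not> |carrier G| \<le>o |Pow K|"
  shows "\<exists>b k. k \<in> K \<and> inj b \<and> range b \<subseteq> carrier G \<and> range b \<inter> U = {} \<and> (\<forall>m n. c (bprod G b m n) = k)"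
proof -
  have infP: "\<not> finite (Pow K)" using infK by simp
  define SS where "SS = {S. S \<subseteq> carrier G \<and> (\<forall>x\<in>S. \<forall>y\<in>S. x \<noteq> y \<longrightarrow> inv x \<otimes> y \<notin> U)}"
  have "\<forall>C\<in>chains SS. \<Union>C \<in> SS"
  proof
    fix C assume C: "C \<in> chains SS"
    have sub: "C \<subseteq> SS" using chainsD2[OF C] .
    have "\<Union>C \<subseteq> carrier G" using sub unfolding SS_def by blast
    moreover have "inv x \<otimes> y \<notin> U" if xy: "x \<in> \<Union>C" "y \<in> \<Union>C" "x \<noteq> y" for x y
    proof -
      obtain A B where AB: "A \<in> C" "B \<in> C" "x \<in> A" "y \<in> B" using xy by blast
      have "A \<subseteq> B \<or> B \<subseteq> A" using chainsD[OF C AB(1,2)] .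
      then show ?thesis
      proof
        assume "A \<subseteq> B" then show ?thesis using sub AB xy(3) unfolding SS_def by blast
      next
        assume "B \<subseteq> A" then show ?thesis using sub AB xy(3) unfolding SS_def by blast
      qed
    qed
    ultimately show "\<Union>C \<in> SS" unfolding SS_def by blast
  qed
  from Zorn_Lemma[OF this] obtain Sm where Sm: "Sm \<in> SS" and mx: "\<forall>X\<in>SS. Sm \<subseteq> X \<longrightarrow> X = Sm" by blast
  have Smc: "Sm \<subseteq> carrier G" and Smp: "\<forall>x\<in>Sm. \<forall>y\<in>Sm. x \<noteq> y \<longrightarrow> inv x \<otimes> y \<notin> U"
    using Sm unfolding SS_def by auto
  have SmBig: "\<not> |Sm| \<le>o |Pow K|"
  proof
    assume small: "|Sm| \<le>o |Pow K|"
    define F1 where "F1 = (\<Union>x\<in>Sm. (\<lambda>u. x \<otimes> u) ` U)"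
    define F2 where "F2 = (\<Union>x\<in>Sm. (\<lambda>u. x \<otimes> inv u) ` U)"
    have "|F1| \<le>o |Pow K|" unfolding F1_def
      by (rule card_of_UNION_ordLeq_infinite[OF infP small]) (use ordLeq_transitive[OF card_of_image U] in blast)
    moreover have "|F2| \<le>o |Pow K|" unfolding F2_def
      by (rule card_of_UNION_ordLeq_infinite[OF infP small]) (use ordLeq_transitive[OF card_of_image U] in blast)
    ultimately have "|F1 \<union> F2| \<le>o |Pow K|" by (rule card_Un_le[OF infP])
    then have sm3: "|Sm \<union> (F1 \<union> F2)| \<le>o |Pow K|" by (rule card_Un_le[OF infP small])
    have "\<not> carrier G \<subseteq> Sm \<union> (F1 \<union> F2)"
    proof
      assume "carrier G \<subseteq> Sm \<union> (F1 \<union> F2)"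
      then have "|carrier G| \<le>o |Sm \<union> (F1 \<union> F2)|" by (rule card_of_mono1)
      then show False using big ordLeq_transitive[OF _ sm3] by blast
    qed
    then obtain z where z: "z \<in> carrier G" "z \<notin> Sm" "z \<notin> F1" "z \<notin> F2" by blast
    have "insert z Sm \<in> SS"
      unfolding SS_def
    proof (intro CollectI conjI ballI impI)
      show "insert z Sm \<subseteq> carrier G" using z Smc by blast
      fix x y assume x: "x \<in> insert z Sm" and y: "y \<in> insert z Sm" and ne: "x \<noteq> y"
      show "inv x \<otimes> y \<notin> U"
      proof
        assume inU: "inv x \<otimes> y \<in> U"
        show False
        proof (cases "x = z")
          case True
          then have yS: "y \<in> Sm" using y ne by blast
          then have "y \<otimes> inv (inv z \<otimes> y) \<in> F2" using inU True unfolding F2_def by blast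
          then show False using gl2[of y z] yS Smc z by auto
        next
          case False
          then have xS: "x \<in> Sm" using x by blast
          show False
          proof (cases "y = z")
            case True
            then have "x \<otimes> (inv x \<otimes> z) \<in> F1" using inU xS unfolding F1_def by blast
            then show False using gl1[of x z] xS Smc z by auto
          next
            case False
            then have "y \<in> Sm" using y by blast
            then show False using Smp xS ne inU by blast
          qed
        qed
      qed
    qed
    then have "insert z Sm = Sm" using mx by blast
    then show False using z by blast
  qed
  define f where "f x y = c (inv x \<otimes> y)" for x y
  have fK: "\<forall>x\<in>Sm. \<forall>y\<in>Sm. f x y \<in> K"
  proof (intro ballI)
    fix x y assume "x \<in> Sm" "y \<in> Sm"
    then have "inv x \<otimes> y \<in> carrier G" using Smc by blast
    then show "f x y \<in> K" unfolding f_def by (rule funcset_mem[OF cK])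
  qed
  obtain hh :: "nat \<Rightarrow> 'a" and k where hh: "inj hh" "range hh \<subseteq> Sm"
    and hom: "\<forall>m n. m < n \<longrightarrow> f (hh m) (hh n) = k"
    using ER[OF infK SmBig fK] by blast
  have "f (hh 0) (hh 1) = k" using hom by simp
  moreover have "hh 0 \<in> Sm" "hh 1 \<in> Sm" using hh(2) by auto
  ultimately have kK: "k \<in> K" using fK by metis
  have hc: "range hh \<subseteq> carrier G" using hh Smc by blast
  obtain b where b: "inj b" "range b \<subseteq> carrier G" "\<forall>n. \<exists>p q. p \<noteq> q \<and> b n = inv (hh p) \<otimes> hh q"
    "\<forall>m n. c (bprod G b m n) = k"
    using block_of_hom[OF hh(1) hc hom[unfolded f_def]] by auto
  have "range b \<inter> U = {}"
  proof -
    have "b n \<notin> U" for n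
    proof -
      obtain p q where pq: "p \<noteq> q" "b n = inv (hh p) \<otimes> hh q" using b(3) by blast
      have "hh p \<noteq> hh q" using pq(1) hh(1) unfolding inj_def by blast
      moreover have "hh p \<in> Sm" "hh q \<in> Sm" using hh(2) by auto
      ultimately have "inv (hh p) \<otimes> hh q \<notin> U" using Smp by blast
      then show ?thesis using pq(2) by simp
    qed
    then show ?thesis by blast
  qed
  then show ?thesis using kK b(1,2,4) by (intro exI[of _ b] exI[of _ k]) simp
qed

end

context group
begin

lemma bigfamily:
  fixes K :: "'k set" and c :: "'a \<Rightarrow> 'k"
  assumes infK: "infinite K" and cK: "c \<in> carrier G \<rightarrow> K"
    and big: "\<not> |carrier G| \<le>o |Pow K|"
  shows "\<exists>k\<in>K. \<exists>M. \<not> |M| \<le>o |Pow K| \<and>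
    (\<forall>b\<in>M. inj b \<and> range b \<subseteq> carrier G \<and> (\<forall>m n. c (bprod G b m n) = k)) \<and>
    (\<forall>b\<in>M. \<forall>b'\<in>M. b \<noteq> b' \<longrightarrow> range b \<inter> range b' = {})"
proof -
  have infP: "\<not> finite (Pow K)" using infK by simp
  define FF where "FF = {M. (\<forall>b\<in>M. inj b \<and> range b \<subseteq> carrier G \<and> (\<exists>k\<in>K. \<forall>m n. c (bprod G b m n) = k))
      \<and> (\<forall>b\<in>M. \<forall>b'\<in>M. b \<noteq> b' \<longrightarrow> range b \<inter> range b' = {})}"
  have "\<forall>C\<in>chains FF. \<Union>C \<in> FF"
  proof
    fix C assume C: "C \<in> chains FF"
    have sub: "C \<subseteq> FF" using chainsD2[OF C] .
    have p1: "\<forall>b\<in>\<Union>C. inj b \<and> range b \<subseteq> carrier G \<and> (\<exists>k\<in>K. \<forall>m n. c (bprod G b m n) = k)"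
    proof
      fix b assume "b \<in> \<Union>C"
      then obtain A where A: "A \<in> C" "b \<in> A" by blast
      then have "A \<in> FF" using sub by blast
      then show "inj b \<and> range b \<subseteq> carrier G \<and> (\<exists>k\<in>K. \<forall>m n. c (bprod G b m n) = k)"
        using A(2) unfolding FF_def by blast
    qed
    have p2: "range b \<inter> range b' = {}" if xy: "b \<in> \<Union>C" "b' \<in> \<Union>C" "b \<noteq> b'" for b b'
    proof -
      obtain A B where AB: "A \<in> C" "B \<in> C" "b \<in> A" "b' \<in> B" using xy by blast
      have "A \<subseteq> B \<or> B \<subseteq> A" using chainsD[OF C AB(1,2)] .
      then show ?thesis
      proof
        assume "A \<subseteq> B" then show ?thesis using sub AB xy(3) unfolding FF_def by blast
      next
        assume "B \<subseteq> A" then show ?thesis using sub AB xy(3) unfolding FF_def by blast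
      qed
    qed
    show "\<Union>C \<in> FF" unfolding FF_def mem_Collect_eq by (intro conjI p1 ballI impI p2)
  qed
  from Zorn_Lemma[OF this] obtain Mx where Mx: "Mx \<in> FF" and mx: "\<forall>X\<in>FF. Mx \<subseteq> X \<longrightarrow> X = Mx"
    by blast
  have Mx1: "\<forall>b\<in>Mx. inj b \<and> range b \<subseteq> carrier G \<and> (\<exists>k\<in>K. \<forall>m n. c (bprod G b m n) = k)"
    and Mx2: "\<forall>b\<in>Mx. \<forall>b'\<in>Mx. b \<noteq> b' \<longrightarrow> range b \<inter> range b' = {}"
    using Mx unfolding FF_def by auto
  have MxBig: "\<not> |Mx| \<le>o |Pow K|"
  proof
    assume small: "|Mx| \<le>o |Pow K|"
    define U where "U = (\<Union>b\<in>Mx. range b)"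
    have natP: "|UNIV::nat set| \<le>o |Pow K|" using infP infinite_iff_card_of_nat by blast
    have "|U| \<le>o |Pow K|" unfolding U_def
      by (rule card_of_UNION_ordLeq_infinite[OF infP small]) (use ordLeq_transitive[OF card_of_image natP] in blast)
    from newblock[OF infK cK this big] obtain b k where
      b: "k \<in> K" "inj b" "range b \<subseteq> carrier G" "range b \<inter> U = {}" "\<forall>m n. c (bprod G b m n) = k"
      by blast
    have bnot: "b \<notin> Mx"
    proof
      assume "b \<in> Mx"
      then have "range b \<subseteq> U" unfolding U_def by blast
      then show False using b(4) by blast
    qed
    have A: "\<forall>b'\<in>insert b Mx. inj b' \<and> range b' \<subseteq> carrier G \<and> (\<exists>k\<in>K. \<forall>m n. c (bprod G b' m n) = k)"
      using Mx1 b by blast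
    have B: "range b1 \<inter> range b2 = {}"
      if b1: "b1 \<in> insert b Mx" and b2: "b2 \<in> insert b Mx" and ne: "b1 \<noteq> b2" for b1 b2
    proof (cases "b1 = b")
      case True
      then have "b2 \<in> Mx" using b2 ne by blast
      then have "range b2 \<subseteq> U" unfolding U_def by blast
      then show ?thesis using True b(4) by blast
    next
      case False
      then have b1M: "b1 \<in> Mx" using b1 by blast
      show ?thesis
      proof (cases "b2 = b")
        case True
        have "range b1 \<subseteq> U" using b1M unfolding U_def by blast
        then show ?thesis using True b(4) by blast
      next
        case False
        then have "b2 \<in> Mx" using b2 by blast
        then show ?thesis using Mx2 b1M ne by blast
      qed
    qed
    have "insert b Mx \<in> FF" unfolding FF_def using A B by blast
    then have "insert b Mx = Mx" using mx by blast
    then show False using bnot by blast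
  qed
  define Mk where "Mk k = {b\<in>Mx. \<forall>m n. c (bprod G b m n) = k}" for k
  have "\<exists>k\<in>K. \<not> |Mk k| \<le>o |Pow K|"
  proof (rule ccontr)
    assume "\<not> ?thesis"
    then have all: "\<forall>k\<in>K. |Mk k| \<le>o |Pow K|" by blast
    have KP: "|K| \<le>o |Pow K|" using card_of_Pow ordLess_imp_ordLeq by blast
    have "|\<Union>k\<in>K. Mk k| \<le>o |Pow K|" by (rule card_of_UNION_ordLeq_infinite[OF infP KP all])
    moreover have "Mx = (\<Union>k\<in>K. Mk k)"
    proof
      show "Mx \<subseteq> (\<Union>k\<in>K. Mk k)"
      proof
        fix b assume bM: "b \<in> Mx"
        then obtain k where "k \<in> K" "\<forall>m n. c (bprod G b m n) = k" using Mx1 by blast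
        then show "b \<in> (\<Union>k\<in>K. Mk k)" using bM unfolding Mk_def by blast
      qed
      show "(\<Union>k\<in>K. Mk k) \<subseteq> Mx" unfolding Mk_def by blast
    qed
    ultimately show False using MxBig by simp
  qed
  then obtain k where k: "k \<in> K" "\<not> |Mk k| \<le>o |Pow K|" by blast
  have "\<forall>b\<in>Mk k. inj b \<and> range b \<subseteq> carrier G \<and> (\<forall>m n. c (bprod G b m n) = k)"
    using Mx1 unfolding Mk_def by blast
  moreover have "\<forall>b\<in>Mk k. \<forall>b'\<in>Mk k. b \<noteq> b' \<longrightarrow> range b \<inter> range b' = {}"
    using Mx2 unfolding Mk_def by blast
  ultimately show ?thesis using k by (intro bexI[of _ k] exI[of _ "Mk k"] conjI) auto
qed

lemma finite_case_block:
  fixes K :: "'k set" and c :: "'a \<Rightarrow> 'k"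
  assumes finK: "finite K" and cK: "c \<in> carrier G \<rightarrow> K" and infG: "infinite (carrier G)"
  shows "\<exists>b k. inj b \<and> range b \<subseteq> carrier G \<and> (\<forall>m n. c (bprod G b m n) = k)"
proof -
  obtain hh0 :: "nat \<Rightarrow> 'a" where h0: "inj hh0" "range hh0 \<subseteq> carrier G"
    using infinite_countable_subset[OF infG] by blast
  obtain idx where idx: "bij_betw idx K {0..<card K}" using ex_bij_betw_finite_nat[OF finK] by blast
  have h0c: "hh0 i \<in> carrier G" for i using h0(2) by blast
  have cin: "c (inv (hh0 m) \<otimes> hh0 n) \<in> K" for m n using funcset_mem[OF cK] h0c by simp
  define col where "col m n = idx (c (inv (hh0 m) \<otimes> hh0 n))" for m n
  have "\<forall>m n. m < n \<longrightarrow> col m n < card K"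
    unfolding col_def using idx cin unfolding bij_betw_def by auto
  from nat_ramsey_ordered[OF this] obtain \<sigma> :: "nat \<Rightarrow> nat" and t where sm: "strict_mono \<sigma>"
    and hom: "\<forall>m n. m < n \<longrightarrow> col (\<sigma> m) (\<sigma> n) = t" by blast
  define hh where "hh i = hh0 (\<sigma> i)" for i
  have injhh: "inj hh"
  proof (rule injI)
    fix a b assume "hh a = hh b"
    then have "\<sigma> a = \<sigma> b" using h0(1) unfolding hh_def inj_def by blast
    then show "a = b" using strict_mono_eq[OF sm] by blast
  qed
  have hc: "range hh \<subseteq> carrier G" using h0c unfolding hh_def by auto
  define k where "k = c (inv (hh 0) \<otimes> hh 1)"
  have "c (inv (hh m) \<otimes> hh n) = k" if "m < n" for m n
  proof -
    have "idx (c (inv (hh m) \<otimes> hh n)) = t" using hom that unfolding col_def hh_def by blast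
    moreover have "idx k = t" using hom unfolding col_def hh_def k_def by simp
    moreover have "inj_on idx K" using idx unfolding bij_betw_def by blast
    ultimately show ?thesis using cin unfolding hh_def k_def inj_on_def by metis
  qed
  then have "\<forall>m n. m < n \<longrightarrow> c (inv (hh m) \<otimes> hh n) = k" by blast
  from block_of_hom[OF injhh hc this] obtain b where
    "inj b" "range b \<subseteq> carrier G" "\<forall>m n. c (bprod G b m n) = k" by blast
  then show ?thesis by blast
qed

end

context cord
begin

lemma dl_const_nat: assumes rn: "r =o natLeq" and aF: "a \<in> Field r"
  shows "dl a = wo_rel.minim r (Field r)"
proof -
  define z where "z = wo_rel.minim r (Field r)"
  have ne: "Field r \<noteq> {}" using inf by auto
  have zF: "z \<in> Field r" unfolding z_def using wo_rel.minim_in[OF wor _ ne] by blast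
  have zle: "(z, x) \<in> r" if "x \<in> Field r" for x unfolding z_def using wo_rel.minim_least[OF wor _ that] by blast
  have "|underS r a| <o natLeq" using ordLess_ordIso_trans[OF card_of_underS[OF CO aF] rn] .
  then have finU: "finite (underS r a)"
    using infinite_iff_natLeq_ordLeq not_ordLess_ordLeq by blast
  have "\<exists>m. it m z \<notin> underS r a"
  proof (rule ccontr)
    assume "\<not> ?thesis"
    then have "range (\<lambda>m. it m z) \<subseteq> underS r a" by blast
    moreover have "inj (\<lambda>m. it m z)" using it_inj[OF zF] unfolding inj_def by blast
    ultimately show False using finU range_inj_infinite finite_subset by blast
  qed
  then have ex: "\<exists>m. it m z \<notin> underS r a" .
  define m0 where "m0 = (LEAST m. it m z \<notin> underS r a)"
  have m0: "it m0 z \<notin> underS r a" unfolding m0_def using LeastI_ex[OF ex] .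
  have "it m0 z = a"
  proof (rule ccontr)
    assume ne0: "it m0 z \<noteq> a"
    then have "(it m0 z, a) \<notin> r" using m0 unfolding underS_def by blast
    then have a_le: "(a, it m0 z) \<in> r" using totr[OF aF it_Field[OF zF]] by blast
    show False
    proof (cases m0)
      case 0
      then show False using zle[OF aF] ne0 \<open>(it m0 z, a) \<notin> r\<close> by simp
    next
      case (Suc m1)
      have "m1 < m0" using Suc by simp
      then have "it m1 z \<in> underS r a" using not_less_Least unfolding m0_def by blast
      then have "(it m1 z, a) \<in> r" "it m1 z \<noteq> a" unfolding underS_def by auto
      then have "(osucc r (it m1 z), a) \<in> r" using suc_least[OF it_Field[OF zF] aF] by blast
      then show False using Suc \<open>(it m0 z, a) \<notin> r\<close> by simp
    qed
  qed
  then have "(dl a, z) \<in> r" using dl_props(3)[OF aF zF] by blast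
  moreover have "(z, dl a) \<in> r" using zle dl_props(1)[OF aF] by blast
  ultimately show ?thesis using antisymr unfolding antisym_def z_def by blast
qed

end

theorem mainTheorem2:
  fixes K :: "'k set" and r :: "'i rel" and G :: "('a, 'b) monoid_scheme"
  assumes "Card_order r"
    and "is_lambda_of r K"
    and "group G"
    and "(card_of (carrier G), r) \<in> ordIso"
  shows "AFP_arrow G r K"
proof -
  interpret G: group G by fact
  have CO: "Card_order r" by fact
  have FO: "|Field r| =o r" using card_of_Field_ordIso[OF CO] .
  have Gr: "|carrier G| =o r" using assms(4) by simp
  define lam where "lam = cardSuc |Pow K|"
  have Clam: "Card_order lam" unfolding lam_def using cardSuc_Card_order card_of_Card_order by blast
  have Wlam: "Well_order lam" using Clam unfolding card_order_on_def by auto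
  have Plam: "|Pow K| <o lam" unfolding lam_def using cardSuc_greater card_of_Card_order by blast
  have islam: "(natLeq \<le>o lam \<longrightarrow> r =o lam) \<and> (lam <o natLeq \<longrightarrow> r =o natLeq)"
    using assms(2) unfolding is_lambda_of_def lam_def by simp
  show ?thesis
    unfolding AFP_arrow_def
  proof (intro ballI)
    fix c assume cK: "c \<in> carrier G \<rightarrow> K"
    have "lam <o natLeq \<or> natLeq \<le>o lam" using ordLess_or_ordLeq[OF Wlam natLeq_Well_order] .
    then show "\<exists>g. g \<in> Field r \<rightarrow> carrier G \<and> inj_on g (Field r) \<and> (\<exists>k. \<forall>x\<in>AFP G r g. c x = k)"
    proof
      assume ln: "natLeq \<le>o lam"
      then have rl: "r =o lam" using islam by blast
      have infK: "infinite K"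
      proof
        assume "finite K"
        then have "finite (Field lam)" unfolding lam_def by (simp add: card_of_cardSuc_finite)
        moreover have "|Field natLeq| \<le>o |Field lam|" using card_of_mono2[OF ln] .
        ultimately have "finite (Field natLeq)" using card_of_ordLeq_finite by blast
        then show False by (simp add: Field_natLeq)
      qed
      have infP: "\<not> finite (Pow K)" using infK by simp
      have Glam: "|carrier G| =o lam" using ordIso_transitive[OF Gr rl] .
      have big: "\<not> |carrier G| \<le>o |Pow K|"
      proof
        assume "|carrier G| \<le>o |Pow K|"
        then have "lam \<le>o |Pow K|" by (rule ordIso_ordLeq_trans[OF ordIso_symmetric[OF Glam]])
        then show False using Plam not_ordLess_ordLeq by blast
      qed
      have Flam: "|Field r| =o lam" using ordIso_transitive[OF FO rl] .
      have infF: "\<not> finite (Field r)"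
      proof
        assume "finite (Field r)"
        then have "|Field r| \<le>o |Pow K|" using finite_le_infinite[OF _ infP] by blast
        then have "lam \<le>o |Pow K|" by (rule ordIso_ordLeq_trans[OF ordIso_symmetric[OF Flam]])
        then show False using Plam not_ordLess_ordLeq by blast
      qed
      interpret cord r using CO infF by unfold_locales
      obtain k M where kK: "k \<in> K" and Mbig: "\<not> |M| \<le>o |Pow K|"
        and M1: "\<forall>b\<in>M. inj b \<and> range b \<subseteq> carrier G \<and> (\<forall>m n. c (bprod G b m n) = k)"
        and M2: "\<forall>b\<in>M. \<forall>b'\<in>M. b \<noteq> b' \<longrightarrow> range b \<inter> range b' = {}"
        using G.bigfamily[OF infK cK big] by (elim bexE exE conjE) (intro that)
      have "|Pow K| <o |M|" using Mbig by (simp add: not_ordLeq_iff_ordLess[OF card_of_Well_order card_of_Well_order])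
      then have "lam \<le>o |M|" unfolding lam_def by (rule cardSuc_least[OF card_of_Card_order card_of_Card_order])
      then have "|Field r| \<le>o |M|" by (rule ordIso_ordLeq_trans[OF Flam])
      then obtain e where e: "inj_on e (Field r)" "e ` Field r \<subseteq> M"
        unfolding card_of_ordLeq[of "Field r" M, symmetric] by (elim exE conjE) (intro that)
      show ?thesis
      proof (rule assemble[of e G c k])
        have eM: "e d \<in> M" if "d \<in> Field r" for d using e(2) that by blast
        show "\<forall>d\<in>Field r. inj (e d)" using eM M1 by simp
        show "\<forall>d\<in>Field r. range (e d) \<subseteq> carrier G" using eM M1 by simp
        show "\<forall>d\<in>Field r. \<forall>m n. c (bprod G (e d) m n) = k" using eM M1 by simp
        show "\<forall>a\<in>Field r. \<forall>a'\<in>Field r. dl a \<noteq> dl a' \<longrightarrow> range (e (dl a)) \<inter> range (e (dl a')) = {}"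
        proof (intro ballI impI)
          fix a a' assume aF: "a \<in> Field r" and a'F: "a' \<in> Field r" and ne: "dl a \<noteq> dl a'"
          have d: "dl a \<in> Field r" "dl a' \<in> Field r" using dl_props(1) aF a'F by auto
          then have "e (dl a) \<noteq> e (dl a')" using inj_on_contraD[OF e(1) ne] by blast
          moreover have "e (dl a) \<in> M" "e (dl a') \<in> M" using d e(2) by auto
          ultimately show "range (e (dl a)) \<inter> range (e (dl a')) = {}" using M2 by simp
        qed
      qed
    next
      assume ln: "lam <o natLeq"
      then have rn: "r =o natLeq" using islam by blast
      have finK: "finite K"
      proof (rule ccontr)
        assume "\<not> finite K"
        then have "natLeq \<le>o |K|" using infinite_iff_natLeq_ordLeq[of K] by blast
        moreover have "|K| \<le>o lam" using ordLess_imp_ordLeq[OF ordLess_transitive[OF card_of_Pow Plam]] .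
        ultimately have "natLeq \<le>o lam" by (rule ordLeq_transitive)
        then show False using ln not_ordLess_ordLeq by blast
      qed
      have Fn: "|Field r| =o natLeq" using ordIso_transitive[OF FO rn] .
      have infF: "\<not> finite (Field r)"
        using infinite_iff_natLeq_ordLeq[of "Field r"] ordIso_imp_ordLeq[OF ordIso_symmetric[OF Fn]] by blast
      have Gn: "|carrier G| =o natLeq" using ordIso_transitive[OF Gr rn] .
      have infG: "\<not> finite (carrier G)"
        using infinite_iff_natLeq_ordLeq[of "carrier G"] ordIso_imp_ordLeq[OF ordIso_symmetric[OF Gn]] by blast
      interpret cord r using CO infF by unfold_locales
      obtain b k where b: "inj b" "range b \<subseteq> carrier G" "\<forall>m n. c (bprod G b m n) = k"
        using G.finite_case_block[OF finK cK infG] by blast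
      show ?thesis
      proof (rule assemble[of "\<lambda>_. b" G c k])
        show "\<forall>d\<in>Field r. inj b" using b by blast
        show "\<forall>d\<in>Field r. range b \<subseteq> carrier G" using b by blast
        show "\<forall>d\<in>Field r. \<forall>m n. c (bprod G b m n) = k" using b by blast
        show "\<forall>a\<in>Field r. \<forall>a'\<in>Field r. dl a \<noteq> dl a' \<longrightarrow> range b \<inter> range b = {}"
          using dl_const_nat[OF rn] by simp
      qed
    qed
  qed
qed

end
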